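(* Let $T$ be a non-empty set and $U=(U(t))_{t\in T}$ a stochastic process whose marginals $U(t)$ are all uniform on $(0,1)$ (with $\inf_{t\in S}U(t)$ and $\sup_{t\in S}U(t)$ measurable for the subsets $S$ below). Suppose there exist a finite covering $T=\bigcup_{j=1}^NT_j$ and $\lambda>1$ such that for every $j=1,\ldots,N$, $$\liminf_{x\downarrow0}\mathbb{P}\Big[\sup_{t\in T_j}U(t)\le\lambda x\ \Big|\ \inf_{t\in T_j}U(t)\le x\Big]>0.$$ Then $\mathbb{P}[\inf_{t\in T}U(t)\le x]=O(x)$ as $x\downarrow0$. *)

theory Defs
  imports "HOL-Probability.Probability" "HOL-Library.Landau_Symbols"
begin

end

theory Submission
  imports Defs
begin

lemma fin_less_INF: "finite A \<Longrightarrow> (\<forall>a\<in>A. ereal y < f a) \<Longrightarrow> ereal y < (INF a\<in>A. f a)"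
  by (induct A rule: finite_induct) (auto simp: top_ereal_def)

lemma unif_bound:
  assumes "f \<in> borel_measurable M" "distr M lborel f = uniform_measure lborel {0<..<(1::real)}" "y \<ge> 0"
  shows "measure M {\<omega>\<in>space M. f \<omega> \<le> y} \<le> y"
proof -
  have "measure M {\<omega>\<in>space M. f \<omega> \<le> y} = measure (distr M lborel f) {..y}"
    using assms(1) by (subst measure_distr) (auto intro!: arg_cong[where f="measure M"])
  also have "\<dots> = measure lborel ({0<..<1} \<inter> {..y}) / measure lborel {0<..<(1::real)}"
    using assms(2) by simp
  also have "\<dots> = measure lborel ({0<..<1} \<inter> {..y})" by simp
  also have "\<dots> \<le> measure lborel {0..y}"
    using assms(3) by (intro measure_mono_fmeasurable) (auto simp: fmeasurable_def)
  also have "\<dots> = y" using assms(3) by simp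
  finally show ?thesis .
qed

theorem lemma1:
  fixes M :: "'a measure" and U :: "'i \<Rightarrow> 'a \<Rightarrow> real"
    and T :: "'i set" and Tj :: "nat \<Rightarrow> 'i set" and N :: nat and lam :: real
  assumes "prob_space M"
    and "T \<noteq> {}"
    and "\<And>t. t \<in> T \<Longrightarrow> U t \<in> borel_measurable M"
    and "\<And>t. t \<in> T \<Longrightarrow> distr M lborel (U t) = uniform_measure lborel {0<..<1}"
    and "T = (\<Union>j\<in>{1..N}. Tj j)"
    and "(\<lambda>\<omega>. INF t\<in>T. ereal (U t \<omega>)) \<in> borel_measurable M"
    and "\<And>j. j \<in> {1..N} \<Longrightarrow> (\<lambda>\<omega>. INF t\<in>Tj j. ereal (U t \<omega>)) \<in> borel_measurable M"
    and "\<And>j. j \<in> {1..N} \<Longrightarrow> (\<lambda>\<omega>. SUP t\<in>Tj j. ereal (U t \<omega>)) \<in> borel_measurable M"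
    and "lam > 1"
    and "\<And>j. j \<in> {1..N} \<Longrightarrow>
      Liminf (at_right 0) (\<lambda>x. ereal (
         measure M {\<omega>\<in>space M. (SUP t\<in>Tj j. ereal (U t \<omega>)) \<le> ereal (lam * x)
                                 \<and> (INF t\<in>Tj j. ereal (U t \<omega>)) \<le> ereal x}
         / measure M {\<omega>\<in>space M. (INF t\<in>Tj j. ereal (U t \<omega>)) \<le> ereal x})) > 0"
  shows "(\<lambda>x. measure M {\<omega>\<in>space M. (INF t\<in>T. ereal (U t \<omega>)) \<le> ereal x})
           \<in> O[at_right 0](\<lambda>x. x)"
proof -
  interpret prob_space M by fact
  define D where "D j x = {\<omega>\<in>space M. (INF t\<in>Tj j. ereal (U t \<omega>)) \<le> ereal x}" for j x
  define Nm where "Nm j x = {\<omega>\<in>space M. (SUP t\<in>Tj j. ereal (U t \<omega>)) \<le> ereal (lam * x)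
                                 \<and> (INF t\<in>Tj j. ereal (U t \<omega>)) \<le> ereal x}" for j x
  define R where "R j x = measure M (Nm j x) / measure M (D j x)" for j x
  have Dsets: "D j x \<in> sets M" if "j \<in> {1..N}" for j x
    unfolding D_def using assms(7)[OF that] by measurable
  have key: "measure M (D j x) \<le> lam * x / c"
    if j: "j \<in> {1..N}" and x: "x > 0" and c: "c > 0" and R: "c < R j x" for j x c
  proof -
    have "measure M (D j x) \<noteq> 0" using R c unfolding R_def by auto
    then have "D j x \<noteq> {}" by auto
    then obtain \<omega> where \<omega>: "\<omega> \<in> D j x" by auto
    have "Tj j \<noteq> {}"
    proof
      assume "Tj j = {}"
      then show False using \<omega> unfolding D_def by (simp add: top_ereal_def)
    qed
    then obtain t0 where t0: "t0 \<in> Tj j" by auto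
    then have t0T: "t0 \<in> T" using assms(5) j by auto
    have "Nm j x \<subseteq> {\<omega>\<in>space M. U t0 \<omega> \<le> lam * x}"
    proof
      fix \<omega> assume "\<omega> \<in> Nm j x"
      then have "\<omega> \<in> space M" "(SUP t\<in>Tj j. ereal (U t \<omega>)) \<le> ereal (lam * x)"
        unfolding Nm_def by auto
      moreover have "ereal (U t0 \<omega>) \<le> (SUP t\<in>Tj j. ereal (U t \<omega>))"
        using t0 by (rule SUP_upper)
      ultimately show "\<omega> \<in> {\<omega>\<in>space M. U t0 \<omega> \<le> lam * x}" using order_trans ereal_less_eq(3) by (metis (mono_tags, lifting) mem_Collect_eq)
    qed
    then have "measure M (Nm j x) \<le> measure M {\<omega>\<in>space M. U t0 \<omega> \<le> lam * x}"
      using assms(3)[OF t0T] by (intro finite_measure_mono) measurable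
    also have "\<dots> \<le> lam * x"
      using unif_bound[OF assms(3)[OF t0T] assms(4)[OF t0T]] x assms(9) by simp
    finally have num: "measure M (Nm j x) \<le> lam * x" .
    have dpos: "measure M (D j x) > 0"
      using \<open>measure M (D j x) \<noteq> 0\<close> measure_nonneg[of M "D j x"] by linarith
    have "c * measure M (D j x) < measure M (Nm j x)"
      using R dpos unfolding R_def by (simp add: field_simps)
    then have "c * measure M (D j x) \<le> lam * x" using num by linarith
    then show ?thesis using c by (simp add: field_simps)
  qed
  have "\<forall>j\<in>{1..N}. \<exists>c>0. eventually (\<lambda>x. c < R j x) (at_right 0)"
  proof
    fix j assume j: "j \<in> {1..N}"
    from assms(10)[OF j] obtain z where z: "0 < ereal z" "ereal z < Liminf (at_right 0) (\<lambda>x. ereal (R j x))"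
      unfolding R_def Nm_def D_def using ereal_dense2 by blast
    have "eventually (\<lambda>x. ereal z < ereal (R j x)) (at_right 0)"
      by (rule less_LiminfD[OF z(2)])
    then show "\<exists>c>0. eventually (\<lambda>x. c < R j x) (at_right 0)" using z(1) by auto
  qed
  then obtain c where c: "\<And>j. j\<in>{1..N} \<Longrightarrow> c j > 0 \<and> eventually (\<lambda>x. c j < R j x) (at_right 0)"
    by metis
  have ev: "eventually (\<lambda>x. \<forall>j\<in>{1..N}. c j < R j x) (at_right 0)"
    using c by (intro eventually_ball_finite) auto
  have ev2: "eventually (\<lambda>x. (0::real) < x) (at_right 0)"
    by (simp add: eventually_at_right_less)
  show ?thesis
  proof (rule bigoI)
    show "eventually (\<lambda>x. norm (measure M {\<omega>\<in>space M. (INF t\<in>T. ereal (U t \<omega>)) \<le> ereal x})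
            \<le> (\<Sum>j\<in>{1..N}. lam / c j) * norm x) (at_right 0)"
      using ev ev2
    proof eventually_elim
      case (elim x)
      have sub: "{\<omega>\<in>space M. (INF t\<in>T. ereal (U t \<omega>)) \<le> ereal x} \<subseteq> (\<Union>j\<in>{1..N}. D j x)"
      proof
        fix \<omega> assume w: "\<omega> \<in> {\<omega>\<in>space M. (INF t\<in>T. ereal (U t \<omega>)) \<le> ereal x}"
        show "\<omega> \<in> (\<Union>j\<in>{1..N}. D j x)"
        proof (rule ccontr)
          assume "\<omega> \<notin> (\<Union>j\<in>{1..N}. D j x)"
          then have "\<forall>j\<in>{1..N}. ereal x < (INF t\<in>Tj j. ereal (U t \<omega>))"
            using w unfolding D_def by auto
          then have "ereal x < (INF j\<in>{1..N}. INF t\<in>Tj j. ereal (U t \<omega>))"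
            by (intro fin_less_INF) auto
          also have "\<dots> \<le> (INF t\<in>T. ereal (U t \<omega>))"
          proof (rule INF_greatest)
            fix t assume "t \<in> T"
            then obtain j where "j \<in> {1..N}" "t \<in> Tj j" using assms(5) by auto
            then show "(INF j\<in>{1..N}. INF t\<in>Tj j. ereal (U t \<omega>)) \<le> ereal (U t \<omega>)"
              by (meson INF_lower2 INF_lower)
          qed
          finally have "ereal x < (INF t\<in>T. ereal (U t \<omega>))" .
          then show False using w by auto
        qed
      qed
      have "measure M {\<omega>\<in>space M. (INF t\<in>T. ereal (U t \<omega>)) \<le> ereal x} \<le> measure M (\<Union>j\<in>{1..N}. D j x)"
        using sub Dsets by (intro finite_measure_mono) auto
      also have "\<dots> \<le> (\<Sum>j\<in>{1..N}. measure M (D j x))"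
        using Dsets by (intro finite_measure_subadditive_finite) auto
      also have "\<dots> \<le> (\<Sum>j\<in>{1..N}. lam * x / c j)"
        proof (rule sum_mono)
        fix j assume j: "j \<in> {1..N}"
        show "measure M (D j x) \<le> lam * x / c j"
          using key[OF j elim(2)] c[OF j] elim(1) j by blast
      qed
      also have "\<dots> = (\<Sum>j\<in>{1..N}. lam / c j) * x"
        by (simp add: sum_distrib_right)
      finally show ?case using elim by simp
    qed
  qed
qed

end
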